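(* Let $\sigma:\mathbb{R}\to\mathbb{R}$ be an increasing odd homeomorphism. If $p\in X_+=\{(x,y)\in\mathbb{R}^2:x>0,\ y\geq0\}$ is $\sigma$-irrational, then $\bigcup_{n\geq0}\bigcup_{k\geq0}E_\sigma^{-n}\big(\{E_\sigma^k(p)\}\big)$ is dense in $X_+$.
   Context: $h_\sigma(x,y)=(x+\sigma^{-1}(y),y)$, $v_\sigma(x,y)=(x,\sigma(x)+y)$. Let $\Omega=\mathbb{R}^2\setminus\{(0,0)\}$, $X=\{(x,y)\in\Omega:xy\geq0,\ x\neq0\}$, $Y=\{(x,y)\in\Omega:xy\leq0,\ y\neq0\}$, and $A=h_\sigma(X)$, $B=v_\sigma(X)$, $C=h_\sigma^{-1}(Y)$, $D=v_\sigma^{-1}(Y)$ (these partition $\Omega$). The generalized Euclidean algorithm $E_\sigma:\Omega\to\Omega$ is $E_\sigma=h_\sigma^{-1}$ on $A$, $v_\sigma^{-1}$ on $B$, $h_\sigma$ on $C$, $v_\sigma$ on $D$; $E_\sigma^{-n}(S)$ is the preimage under the $n$-th iterate. The $\sigma$-rational lines are the axes $Ox,Oy$, the sets $m(Ox)$ with $m$ in the monoid generated by $h_\sigma,v_\sigma$, and the sets $m(Oy)$ with $m$ in the monoid generated by $h_\sigma^{-1},v_\sigma^{-1}$; a point is $\sigma$-irrational if it lies on none of them. *)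

theory Defs
  imports "HOL-Analysis.Analysis"
begin

type_synonym pt = "real \<times> real"

definition hs :: "(real \<Rightarrow> real) \<Rightarrow> pt \<Rightarrow> pt" where
  "hs \<sigma> p = (fst p + inv \<sigma> (snd p), snd p)"
definition hs_inv :: "(real \<Rightarrow> real) \<Rightarrow> pt \<Rightarrow> pt" where
  "hs_inv \<sigma> p = (fst p - inv \<sigma> (snd p), snd p)"
definition vs :: "(real \<Rightarrow> real) \<Rightarrow> pt \<Rightarrow> pt" where
  "vs \<sigma> p = (fst p, \<sigma> (fst p) + snd p)"
definition vs_inv :: "(real \<Rightarrow> real) \<Rightarrow> pt \<Rightarrow> pt" where
  "vs_inv \<sigma> p = (fst p, snd p - \<sigma> (fst p))"

definition Omega :: "pt set" where "Omega = UNIV - {(0,0)}"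
definition Xset :: "pt set" where
  "Xset = {p \<in> Omega. fst p * snd p \<ge> 0 \<and> fst p \<noteq> 0}"
definition Yset :: "pt set" where
  "Yset = {p \<in> Omega. fst p * snd p \<le> 0 \<and> snd p \<noteq> 0}"

definition Aset where "Aset \<sigma> = hs \<sigma> ` Xset"
definition Bset where "Bset \<sigma> = vs \<sigma> ` Xset"
definition Cset where "Cset \<sigma> = hs_inv \<sigma> ` Yset"
definition Dset where "Dset \<sigma> = vs_inv \<sigma> ` Yset"

text \<open>Generalized Euclidean algorithm; the value at the origin (outside Omega) is irrelevant.\<close>
definition Eucl :: "(real \<Rightarrow> real) \<Rightarrow> pt \<Rightarrow> pt" where
  "Eucl \<sigma> p = (if p \<in> Aset \<sigma> then hs_inv \<sigma> p
     else if p \<in> Bset \<sigma> then vs_inv \<sigma> p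
     else if p \<in> Cset \<sigma> then hs \<sigma> p
     else if p \<in> Dset \<sigma> then vs \<sigma> p else p)"

definition Eucl_preim :: "(real \<Rightarrow> real) \<Rightarrow> nat \<Rightarrow> pt set \<Rightarrow> pt set" where
  "Eucl_preim \<sigma> n S = {q \<in> Omega. (Eucl \<sigma> ^^ n) q \<in> S}"

inductive_set gen_monoid :: "(pt \<Rightarrow> pt) set \<Rightarrow> (pt \<Rightarrow> pt) set" for G where
  gm_id: "id \<in> gen_monoid G"
| gm_step: "f \<in> gen_monoid G \<Longrightarrow> g \<in> G \<Longrightarrow> g \<circ> f \<in> gen_monoid G"

definition Ox :: "pt set" where "Ox = {(x, 0) | x. True}"
definition Oy :: "pt set" where "Oy = {(0, y) | y. True}"

definition sigma_rational_lines :: "(real \<Rightarrow> real) \<Rightarrow> pt set set" where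
  "sigma_rational_lines \<sigma> = {Ox, Oy}
     \<union> {m ` Ox | m. m \<in> gen_monoid {hs \<sigma>, vs \<sigma>}}
     \<union> {m ` Oy | m. m \<in> gen_monoid {hs_inv \<sigma>, vs_inv \<sigma>}}"

definition sigma_irrational :: "(real \<Rightarrow> real) \<Rightarrow> pt \<Rightarrow> bool" where
  "sigma_irrational \<sigma> p \<longleftrightarrow> (\<forall>L \<in> sigma_rational_lines \<sigma>. p \<notin> L)"

definition Xplus :: "pt set" where "Xplus = {p. fst p > 0 \<and> snd p \<ge> 0}"

end

theory Submission
  imports Defs
begin


fun letter :: "(real \<Rightarrow> real) \<Rightarrow> bool \<Rightarrow> pt \<Rightarrow> pt" where
  "letter \<sigma> c = (if c then hs \<sigma> else vs \<sigma>)"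
fun letter_inv :: "(real \<Rightarrow> real) \<Rightarrow> bool \<Rightarrow> pt \<Rightarrow> pt" where
  "letter_inv \<sigma> c = (if c then hs_inv \<sigma> else vs_inv \<sigma>)"

fun Wd :: "(real \<Rightarrow> real) \<Rightarrow> bool list \<Rightarrow> pt \<Rightarrow> pt" where
  "Wd \<sigma> [] = id"
| "Wd \<sigma> (c # cs) = Wd \<sigma> cs \<circ> letter \<sigma> c"

fun Wi :: "(real \<Rightarrow> real) \<Rightarrow> bool list \<Rightarrow> pt \<Rightarrow> pt" where
  "Wi \<sigma> [] = id"
| "Wi \<sigma> (c # cs) = letter_inv \<sigma> c \<circ> Wi \<sigma> cs"

definition Lc :: "(real \<Rightarrow> real) \<Rightarrow> pt \<Rightarrow> bool" where
  "Lc \<sigma> z \<longleftrightarrow> snd z < \<sigma> (fst z)"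

fun itw :: "(real \<Rightarrow> real) \<Rightarrow> pt \<Rightarrow> nat \<Rightarrow> bool list" where
  "itw \<sigma> z 0 = []"
| "itw \<sigma> z (Suc n) = Lc \<sigma> ((Eucl \<sigma> ^^ n) z) # itw \<sigma> z n"

lemma Wd_append: "Wd \<sigma> (xs @ ys) = Wd \<sigma> ys \<circ> Wd \<sigma> xs"
  by (induction xs) auto

lemma Wd_monoid: "Wd \<sigma> cs \<in> gen_monoid {hs \<sigma>, vs \<sigma>}"
proof (induction cs rule: rev_induct)
  case Nil then show ?case by (metis Wd.simps(1) gm_id)
next
  case (snoc c cs)
  have eq: "Wd \<sigma> (cs @ [c]) = letter \<sigma> c \<circ> Wd \<sigma> cs" by (simp add: Wd_append)
  have l: "letter \<sigma> c \<in> {hs \<sigma>, vs \<sigma>}" by simp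
  have m: "letter \<sigma> c \<circ> Wd \<sigma> cs \<in> gen_monoid {hs \<sigma>, vs \<sigma>}"
    by (rule gm_step[OF snoc l])
  show ?case by (subst eq) (rule m)
qed

locale sig =
  fixes \<sigma> :: "real \<Rightarrow> real" and g :: "real \<Rightarrow> real"
  assumes smono: "strict_mono \<sigma>"
    and sodd: "\<And>x. \<sigma> (- x) = - \<sigma> x"
    and homeo: "homeomorphism UNIV UNIV \<sigma> g"
begin

lemma g_s[simp]: "g (\<sigma> x) = x" using homeo by (simp add: homeomorphism_def)
lemma s_g[simp]: "\<sigma> (g y) = y" using homeo by (simp add: homeomorphism_def)
lemma cont_g: "continuous_on UNIV g" using homeo by (simp add: homeomorphism_def)
lemma cont_s: "continuous_on UNIV \<sigma>" using homeo by (simp add: homeomorphism_def)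
lemma inv_s: "inv \<sigma> = g" by (rule inv_equality) auto
lemma s_less[simp]: "\<sigma> x < \<sigma> y \<longleftrightarrow> x < y" using smono by (simp add: strict_mono_less)
lemma s_le[simp]: "\<sigma> x \<le> \<sigma> y \<longleftrightarrow> x \<le> y" using smono by (simp add: strict_mono_less_eq)
lemma g_less[simp]: "g x < g y \<longleftrightarrow> x < y" by (metis s_g s_less)
lemma g_le[simp]: "g x \<le> g y \<longleftrightarrow> x \<le> y" by (metis s_g s_le)
lemma s0[simp]: "\<sigma> 0 = 0" using sodd[of 0] by simp
lemma g0[simp]: "g 0 = 0" by (metis g_s s0)
lemma s_pos[simp]: "0 < \<sigma> x \<longleftrightarrow> 0 < x" by (metis s0 s_less)
lemma g_pos[simp]: "0 < g x \<longleftrightarrow> 0 < x" by (metis g0 g_less)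
lemma s_nn[simp]: "0 \<le> \<sigma> x \<longleftrightarrow> 0 \<le> x" by (metis s0 s_le)
lemma g_nn[simp]: "0 \<le> g x \<longleftrightarrow> 0 \<le> x" by (metis g0 g_le)

lemma hs_eq: "hs \<sigma> p = (fst p + g (snd p), snd p)" by (simp add: hs_def inv_s)
lemma hs_inv_eq: "hs_inv \<sigma> p = (fst p - g (snd p), snd p)" by (simp add: hs_inv_def inv_s)

lemma E_A:
  assumes "z \<in> Xplus" "Lc \<sigma> z" shows "Eucl \<sigma> z = hs_inv \<sigma> z"
proof -
  obtain x y where z: "z = (x, y)" by force
  have xy: "x > 0" "y \<ge> 0" "y < \<sigma> x" using assms by (auto simp: z Xplus_def Lc_def)
  have "g y < x" using xy by (metis g_s g_less)
  then have "hs_inv \<sigma> z \<in> Xset" using xy by (auto simp: z hs_inv_eq Xset_def Omega_def)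
  moreover have "z = hs \<sigma> (hs_inv \<sigma> z)" by (simp add: z hs_eq hs_inv_eq)
  ultimately have "z \<in> Aset \<sigma>" unfolding Aset_def by blast
  then show ?thesis by (simp add: Eucl_def)
qed

lemma E_B:
  assumes "z \<in> Xplus" "\<not> Lc \<sigma> z" shows "Eucl \<sigma> z = vs_inv \<sigma> z"
proof -
  obtain x y where z: "z = (x, y)" by force
  have xy: "x > 0" "y \<ge> 0" "y \<ge> \<sigma> x" using assms by (auto simp: z Xplus_def Lc_def)
  have yp: "y > 0" using xy by (meson less_le_trans s_pos)
  have nA: "z \<notin> Aset \<sigma>"
  proof
    assume "z \<in> Aset \<sigma>"
    then obtain w where w: "w \<in> Xset" "z = hs \<sigma> w" unfolding Aset_def by blast
    then have w2: "snd w = y" "fst w + g y = x" by (auto simp: z hs_eq)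
    have "fst w * snd w \<ge> 0" "fst w \<noteq> 0" using w(1) by (auto simp: Xset_def)
    then have "fst w > 0" using w2 yp by (auto simp: zero_le_mult_iff)
    then have "g y < x" using w2 by linarith
    then have "y < \<sigma> x" by (metis s_g s_less)
    then show False using xy by simp
  qed
  have "vs_inv \<sigma> z \<in> Xset" using xy by (auto simp: z vs_inv_def Xset_def Omega_def)
  moreover have "z = vs \<sigma> (vs_inv \<sigma> z)" by (simp add: z vs_def vs_inv_def)
  ultimately have "z \<in> Bset \<sigma>" unfolding Bset_def by blast
  then show ?thesis using nA by (simp add: Eucl_def)
qed

lemma E_eq: "z \<in> Xplus \<Longrightarrow> Eucl \<sigma> z = letter_inv \<sigma> (Lc \<sigma> z) z"
  using E_A E_B by auto

lemma E_X: "z \<in> Xplus \<Longrightarrow> Eucl \<sigma> z \<in> Xplus"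
  apply (cases "Lc \<sigma> z")
   apply (simp_all add: E_A E_B)
   apply (auto simp: Xplus_def Lc_def hs_inv_eq vs_inv_def)
  by (metis g_less g_s)

lemma letter_X: "z \<in> Xplus \<Longrightarrow> letter \<sigma> c z \<in> Xplus"
  by (auto simp: Xplus_def hs_eq vs_def add_pos_nonneg)

lemma E_letter: assumes "z \<in> Xplus" shows "Eucl \<sigma> (letter \<sigma> c z) = z"
proof (cases c)
  case True
  obtain x y where z: "z = (x, y)" by force
  have xy: "x > 0" "y \<ge> 0" using assms by (auto simp: z Xplus_def)
  have "y < \<sigma> (x + g y)" using xy by (metis add_pos_nonneg g_nn g_less less_add_same_cancel2 s_g s_less) 
  then have "Lc \<sigma> (hs \<sigma> z)" by (simp add: Lc_def z hs_eq)
  then show ?thesis using True E_A letter_X[OF assms, of True] by (simp add: z hs_eq hs_inv_eq)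
next
  case False
  obtain x y where z: "z = (x, y)" by force
  have xy: "x > 0" "y \<ge> 0" using assms by (auto simp: z Xplus_def)
  have "\<not> Lc \<sigma> (vs \<sigma> z)" using xy by (simp add: Lc_def z vs_def)
  then show ?thesis using False E_B letter_X[OF assms, of False] by (simp add: z vs_def vs_inv_def)
qed

lemma Wd_X: "z \<in> Xplus \<Longrightarrow> Wd \<sigma> cs z \<in> Xplus"
  by (induction cs arbitrary: z) (auto simp: letter_X simp del: letter.simps)

lemma E_Wd: "z \<in> Xplus \<Longrightarrow> (Eucl \<sigma> ^^ length cs) (Wd \<sigma> cs z) = z"
proof (induction cs arbitrary: z)
  case Nil then show ?case by simp
next
  case (Cons c cs)
  have "(Eucl \<sigma> ^^ length (c # cs)) (Wd \<sigma> (c # cs) z) = Eucl \<sigma> ((Eucl \<sigma> ^^ length cs) (Wd \<sigma> cs (letter \<sigma> c z)))"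
    by (simp only: list.size funpow.simps comp_apply Wd.simps add_Suc_right add_0_right)
  also have "\<dots> = Eucl \<sigma> (letter \<sigma> c z)" using Cons.IH[OF letter_X[OF Cons.prems]] by (simp only:)
  also have "\<dots> = z" using E_letter[OF Cons.prems] by (simp only:)
  finally show ?case .
qed

lemma Wd_Wi: "Wd \<sigma> cs (Wi \<sigma> cs u) = u"
  by (induction cs arbitrary: u) (auto simp: hs_eq hs_inv_eq vs_def vs_inv_def)

lemma orbit_X: "z \<in> Xplus \<Longrightarrow> (Eucl \<sigma> ^^ n) z \<in> Xplus"
  by (induction n) (auto simp: E_X)

lemma orbit_Wi: assumes "z \<in> Xplus" shows "(Eucl \<sigma> ^^ n) z = Wi \<sigma> (itw \<sigma> z n) z"
proof (induction n)
  case 0 then show ?case by simp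
next
  case (Suc n)
  have "(Eucl \<sigma> ^^ Suc n) z = letter_inv \<sigma> (Lc \<sigma> ((Eucl \<sigma> ^^ n) z)) ((Eucl \<sigma> ^^ n) z)"
    using E_eq[OF orbit_X[OF assms, of n]] by simp
  also have "\<dots> = Wi \<sigma> (itw \<sigma> z (Suc n)) z" using Suc by (simp del: letter_inv.simps)
  finally show ?case .
qed

lemma orbit_Wd: "z \<in> Xplus \<Longrightarrow> z = Wd \<sigma> (itw \<sigma> z n) ((Eucl \<sigma> ^^ n) z)"
  by (simp add: orbit_Wi Wd_Wi)

lemma orbit_step: assumes "z \<in> Xplus"
  shows "(fst ((Eucl \<sigma> ^^ Suc n) z) = fst ((Eucl \<sigma> ^^ n) z) - g (snd ((Eucl \<sigma> ^^ n) z)) \<and>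
          snd ((Eucl \<sigma> ^^ Suc n) z) = snd ((Eucl \<sigma> ^^ n) z)) \<or>
         (fst ((Eucl \<sigma> ^^ Suc n) z) = fst ((Eucl \<sigma> ^^ n) z) \<and>
          snd ((Eucl \<sigma> ^^ Suc n) z) = snd ((Eucl \<sigma> ^^ n) z) - \<sigma> (fst ((Eucl \<sigma> ^^ n) z)))"
  using E_eq[OF orbit_X[OF assms, of n]] by (auto simp: hs_inv_eq vs_inv_def)

end


context sig
begin

lemma x_small:
  fixes x y :: "nat \<Rightarrow> real"
  assumes xp: "\<And>n. x n > 0" and yp: "\<And>n. y n > 0"
    and st: "\<And>n. (x (Suc n) = x n - g (y n) \<and> y (Suc n) = y n) \<or> (x (Suc n) = x n \<and> y (Suc n) = y n - \<sigma> (x n))"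
    and e: "e > 0"
  shows "\<exists>n. x n < e"
proof (rule ccontr)
  assume "\<not> ?thesis"
  then have xe: "\<And>n. x n \<ge> e" by (simp add: not_less)
  have "decseq y"
  proof (rule decseq_SucI)
    fix n show "y (Suc n) \<le> y n" using st[of n] xp[of n] by auto
  qed
  then have ymono: "\<And>m n. n \<le> m \<Longrightarrow> y m \<le> y n" by (simp add: decseq_def)
  have infB: "\<exists>m\<ge>n. y (Suc m) = y m - \<sigma> (x m)" for n
  proof (rule ccontr)
    assume "\<not> ?thesis"
    then have A: "\<And>m. m \<ge> n \<Longrightarrow> x (Suc m) = x m - g (y m) \<and> y (Suc m) = y m"
      using st by metis
    have "y (n + k) = y n \<and> x (n + k) = x n - real k * g (y n)" for k
    proof (induction k)
      case 0 then show ?case by simp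
    next
      case (Suc k)
      then show ?case using A[of "n + k"] by (simp add: algebra_simps)
    qed
    moreover have "g (y n) > 0" using yp by simp
    then obtain k where "x n < real k * g (y n)" using reals_Archimedean3 by blast
    ultimately have "x (n + k) < 0" by simp
    then show False using xp[of "n + k"] by simp
  qed
  have cnt: "\<exists>n. y n \<le> y 0 - real k * \<sigma> e" for k
  proof (induction k)
    case 0 then show ?case by auto
  next
    case (Suc k)
    then obtain n where n: "y n \<le> y 0 - real k * \<sigma> e" by blast
    obtain m where m: "m \<ge> n" "y (Suc m) = y m - \<sigma> (x m)" using infB by blast
    have "\<sigma> e \<le> \<sigma> (x m)" using xe by simp
    moreover have "real (Suc k) * \<sigma> e = real k * \<sigma> e + \<sigma> e" by (simp add: algebra_simps)
    ultimately have "y (Suc m) \<le> y 0 - real (Suc k) * \<sigma> e" using m n ymono[OF m(1)] by linarith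
    then show ?case by blast
  qed
  have "\<sigma> e > 0" using e by simp
  then obtain k where "y 0 < real k * \<sigma> e" using reals_Archimedean3 by blast
  moreover obtain n where "y n \<le> y 0 - real k * \<sigma> e" using cnt[of k] by blast
  ultimately have "y n < 0" by linarith
  then show False using yp[of n] by simp
qed

lemma y_small:
  fixes x y :: "nat \<Rightarrow> real"
  assumes xp: "\<And>n. x n > 0" and yp: "\<And>n. y n > 0"
    and st: "\<And>n. (x (Suc n) = x n - g (y n) \<and> y (Suc n) = y n) \<or> (x (Suc n) = x n \<and> y (Suc n) = y n - \<sigma> (x n))"
    and e: "e > 0"
  shows "\<exists>n. y n < e"
proof (rule ccontr)
  assume "\<not> ?thesis"
  then have ye: "\<And>n. y n \<ge> e" by (simp add: not_less)
  have "decseq x"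
  proof (rule decseq_SucI)
    fix n show "x (Suc n) \<le> x n" using st[of n] yp[of n] by auto
  qed
  then have xmono: "\<And>m n. n \<le> m \<Longrightarrow> x m \<le> x n" by (simp add: decseq_def)
  have infA: "\<exists>m\<ge>n. x (Suc m) = x m - g (y m)" for n
  proof (rule ccontr)
    assume "\<not> ?thesis"
    then have B: "\<And>m. m \<ge> n \<Longrightarrow> x (Suc m) = x m \<and> y (Suc m) = y m - \<sigma> (x m)"
      using st by metis
    have "x (n + k) = x n \<and> y (n + k) = y n - real k * \<sigma> (x n)" for k
    proof (induction k)
      case 0 then show ?case by simp
    next
      case (Suc k)
      then show ?case using B[of "n + k"] by (simp add: algebra_simps)
    qed
    moreover have "\<sigma> (x n) > 0" using xp by simp
    then obtain k where "y n < real k * \<sigma> (x n)" using reals_Archimedean3 by blast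
    ultimately have "y (n + k) < 0" by simp
    then show False using yp[of "n + k"] by simp
  qed
  have cnt: "\<exists>n. x n \<le> x 0 - real k * g e" for k
  proof (induction k)
    case 0 then show ?case by auto
  next
    case (Suc k)
    then obtain n where n: "x n \<le> x 0 - real k * g e" by blast
    obtain m where m: "m \<ge> n" "x (Suc m) = x m - g (y m)" using infA by blast
    have "g e \<le> g (y m)" using ye by simp
    moreover have "real (Suc k) * g e = real k * g e + g e" by (simp add: algebra_simps)
    ultimately have "x (Suc m) \<le> x 0 - real (Suc k) * g e" using m n xmono[OF m(1)] by linarith
    then show ?case by blast
  qed
  have "g e > 0" using e by simp
  then obtain k where "x 0 < real k * g e" using reals_Archimedean3 by blast
  moreover obtain n where "x n \<le> x 0 - real k * g e" using cnt[of k] by blast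
  ultimately have "x n < 0" by linarith
  then show False using xp[of n] by simp
qed

lemma orbit_mono:
  assumes "z \<in> Xplus" "n \<le> m"
  shows "fst ((Eucl \<sigma> ^^ m) z) \<le> fst ((Eucl \<sigma> ^^ n) z) \<and> snd ((Eucl \<sigma> ^^ m) z) \<le> snd ((Eucl \<sigma> ^^ n) z)"
  using assms(2)
proof (induction m rule: dec_induct)
  case base then show ?case by simp
next
  case (step m)
  have X: "(Eucl \<sigma> ^^ m) z \<in> Xplus" using orbit_X[OF assms(1)] by blast
  then have "fst ((Eucl \<sigma> ^^ Suc m) z) \<le> fst ((Eucl \<sigma> ^^ m) z) \<and> snd ((Eucl \<sigma> ^^ Suc m) z) \<le> snd ((Eucl \<sigma> ^^ m) z)"
    using orbit_step[OF assms(1), of m] by (auto simp: Xplus_def)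
  then show ?case using step by linarith
qed

lemma same_itw:
  assumes "\<forall>i<n. Lc \<sigma> ((Eucl \<sigma> ^^ i) z1) = Lc \<sigma> ((Eucl \<sigma> ^^ i) z2)"
  shows "itw \<sigma> z1 n = itw \<sigma> z2 n"
  using assms by (induction n) auto

lemma invariant:
  assumes z: "z1 \<in> Xplus" "z2 \<in> Xplus" and l: "l \<ge> 0" "fst z2 - fst z1 \<ge> l" "snd z2 \<le> snd z1"
    and same: "\<forall>i<n. Lc \<sigma> ((Eucl \<sigma> ^^ i) z1) = Lc \<sigma> ((Eucl \<sigma> ^^ i) z2)"
  shows "fst ((Eucl \<sigma> ^^ n) z2) - fst ((Eucl \<sigma> ^^ n) z1) \<ge> l \<and> snd ((Eucl \<sigma> ^^ n) z2) \<le> snd ((Eucl \<sigma> ^^ n) z1)"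
  using same
proof (induction n)
  case 0 then show ?case using l by simp
next
  case (Suc n)
  define u1 where "u1 = (Eucl \<sigma> ^^ n) z1"
  define u2 where "u2 = (Eucl \<sigma> ^^ n) z2"
  have IH: "fst u2 - fst u1 \<ge> l" "snd u2 \<le> snd u1" using Suc by (auto simp: u1_def u2_def)
  have X: "u1 \<in> Xplus" "u2 \<in> Xplus" using orbit_X z by (auto simp: u1_def u2_def)
  have sm: "Lc \<sigma> u1 = Lc \<sigma> u2" using Suc.prems by (auto simp: u1_def u2_def)
  have e1: "(Eucl \<sigma> ^^ Suc n) z1 = Eucl \<sigma> u1" and e2: "(Eucl \<sigma> ^^ Suc n) z2 = Eucl \<sigma> u2"
    by (simp_all add: u1_def u2_def)
  show ?case
  proof (cases "Lc \<sigma> u1")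
    case True
    then have "Lc \<sigma> u2" using sm by simp
    have "g (snd u2) \<le> g (snd u1)" using IH by simp
    then show ?thesis using True IH unfolding e1 e2 E_A[OF X(1) True] E_A[OF X(2) \<open>Lc \<sigma> u2\<close>]
      by (auto simp: hs_inv_eq simp del: g_le)
  next
    case False
    then have "\<not> Lc \<sigma> u2" using sm by simp
    moreover have "\<sigma> (fst u1) \<le> \<sigma> (fst u2)" using IH l by simp
    ultimately show ?thesis using False IH unfolding e1 e2 E_B[OF X(1) False] E_B[OF X(2) \<open>\<not> Lc \<sigma> u2\<close>]
      by (auto simp: vs_inv_def simp del: s_le)
  qed
qed

end


context sig
begin

lemma cont_gsnd: "continuous_on UNIV (\<lambda>p::pt. g (snd p))"
  by (rule continuous_on_compose2[OF cont_g]) (auto intro: continuous_intros)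
lemma cont_sfst: "continuous_on UNIV (\<lambda>p::pt. \<sigma> (fst p))"
  by (rule continuous_on_compose2[OF cont_s]) (auto intro: continuous_intros)

lemma cont_letter: "continuous_on UNIV (letter \<sigma> c)"
proof -
  have "hs \<sigma> = (\<lambda>p. (fst p + g (snd p), snd p))" by (rule ext) (simp add: hs_eq)
  moreover have "vs \<sigma> = (\<lambda>p. (fst p, \<sigma> (fst p) + snd p))" by (rule ext) (simp add: vs_def)
  ultimately show ?thesis using cont_gsnd cont_sfst by (auto intro!: continuous_intros)
qed

lemma cont_letter_inv: "continuous_on UNIV (letter_inv \<sigma> c)"
proof -
  have "hs_inv \<sigma> = (\<lambda>p. (fst p - g (snd p), snd p))" by (rule ext) (simp add: hs_inv_eq)
  moreover have "vs_inv \<sigma> = (\<lambda>p. (fst p, snd p - \<sigma> (fst p)))" by (rule ext) (simp add: vs_inv_def)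
  ultimately show ?thesis using cont_gsnd cont_sfst by (auto intro!: continuous_intros)
qed

lemma cont_Wd: "continuous_on UNIV (Wd \<sigma> cs)"
proof (induction cs)
  case Nil then show ?case by (simp add: continuous_on_id)
next
  case (Cons c cs)
  show ?case unfolding Wd.simps
    by (rule continuous_on_compose[OF cont_letter]) (rule continuous_on_subset[OF Cons], simp)
qed

lemma cont_Wi: "continuous_on UNIV (Wi \<sigma> cs)"
proof (induction cs)
  case Nil then show ?case by (simp add: continuous_on_id)
next
  case (Cons c cs)
  show ?case unfolding Wi.simps
    by (rule continuous_on_compose[OF Cons]) (rule continuous_on_subset[OF cont_letter_inv], simp)
qed

definition le2 :: "pt \<Rightarrow> pt \<Rightarrow> bool" where
  "le2 u v \<longleftrightarrow> fst u \<le> fst v \<and> snd u \<le> snd v"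

lemma Wd_mono: "le2 u v \<Longrightarrow> le2 (Wd \<sigma> cs u) (Wd \<sigma> cs v)"
proof (induction cs arbitrary: u v)
  case Nil then show ?case by simp
next
  case (Cons c cs)
  have "le2 (letter \<sigma> c u) (letter \<sigma> c v)"
    using Cons.prems by (auto simp: le2_def hs_eq vs_def add_mono)
  then show ?case using Cons.IH by (simp del: letter.simps)
qed

lemma Wd_0: "Wd \<sigma> cs (0,0) = (0,0)"
  by (induction cs) (auto simp: hs_eq vs_def)

lemma rat_dense:
  assumes a: "0 < a1" "a1 < a2" and b: "0 < b"
  shows "\<exists>cs s z. 0 < s \<and> a1 \<le> z \<and> z \<le> a2 \<and> Wd \<sigma> cs (s, 0) = (z, b)"
proof -
  define P where "P = (a1, b)"
  define Q where "Q = (a2, b)"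
  have PX: "P \<in> Xplus" and QX: "Q \<in> Xplus" using a b by (auto simp: P_def Q_def Xplus_def)
  define o1 where "o1 n = (Eucl \<sigma> ^^ n) P" for n
  define o2 where "o2 n = (Eucl \<sigma> ^^ n) Q" for n
  define l where "l = a2 - a1"
  have l: "l > 0" using a by (simp add: l_def)
  have inv: "fst (o2 n) - fst (o1 n) \<ge> l \<and> snd (o2 n) \<le> snd (o1 n)"
    if "\<forall>i<n. Lc \<sigma> (o1 i) = Lc \<sigma> (o2 i)" for n
    using invariant[OF PX QX, of l n] that l by (simp add: o1_def o2_def P_def Q_def l_def)
  show ?thesis
  proof (cases "\<exists>n. Lc \<sigma> (o1 n) \<noteq> Lc \<sigma> (o2 n)")
    case True
    then obtain n where n: "Lc \<sigma> (o1 n) \<noteq> Lc \<sigma> (o2 n)" "\<forall>i<n. Lc \<sigma> (o1 i) = Lc \<sigma> (o2 i)"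
      using exists_least_iff[of "\<lambda>n. Lc \<sigma> (o1 n) \<noteq> Lc \<sigma> (o2 n)"] by blast
    have iv: "fst (o2 n) - fst (o1 n) \<ge> l" "snd (o2 n) \<le> snd (o1 n)" using inv[OF n(2)] by auto
    have nL1: "\<not> Lc \<sigma> (o1 n)"
    proof
      assume L1: "Lc \<sigma> (o1 n)"
      have "\<sigma> (fst (o1 n)) \<le> \<sigma> (fst (o2 n))" using iv l by simp
      then have "Lc \<sigma> (o2 n)" using L1 iv by (auto simp: Lc_def simp del: s_le)
      then show False using n L1 by simp
    qed
    then have L2: "Lc \<sigma> (o2 n)" using n by simp
    define cs where "cs = itw \<sigma> P n"
    have cs2: "cs = itw \<sigma> Q n" using same_itw[of n P Q] n(2) by (simp add: cs_def o1_def o2_def)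
    have w1: "o1 n = Wi \<sigma> cs P" using orbit_Wi[OF PX] by (simp add: o1_def cs_def)
    have w2: "o2 n = Wi \<sigma> cs Q" using orbit_Wi[OF QX] by (simp add: o2_def cs2)
    define \<phi> where "\<phi> t = snd (Wi \<sigma> cs (t, b)) - \<sigma> (fst (Wi \<sigma> cs (t, b)))" for t
    have c1: "continuous_on UNIV (\<lambda>t::real. Wi \<sigma> cs (t, b))"
      by (rule continuous_on_compose2[OF cont_Wi]) (auto intro: continuous_intros)
    have c2: "continuous_on UNIV (\<lambda>t::real. \<sigma> (fst (Wi \<sigma> cs (t, b))))"
      by (rule continuous_on_compose2[OF cont_s]) (auto intro: continuous_intros c1)
    have cphi: "continuous_on {a1..a2} \<phi>"
      unfolding \<phi>_def by (rule continuous_on_subset[of UNIV]) (auto intro!: continuous_intros c1 c2)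
    have "\<phi> a2 \<le> 0" using L2 w2 by (simp add: \<phi>_def Lc_def Q_def)
    moreover have "0 \<le> \<phi> a1" using nL1 w1 by (simp add: \<phi>_def Lc_def P_def)
    ultimately obtain t where t: "a1 \<le> t" "t \<le> a2" "\<phi> t = 0"
      using IVT2'[of \<phi> a2 0 a1] cphi a by auto
    define u where "u = Wi \<sigma> cs (t, b)"
    define s where "s = fst u"
    have u: "u = vs \<sigma> (s, 0)" using t(3) by (simp add: u_def s_def vs_def \<phi>_def prod_eq_iff)
    have Wu: "Wd \<sigma> cs u = (t, b)" by (simp add: u_def Wd_Wi)
    have sp: "s > 0"
    proof (rule ccontr)
      assume "\<not> s > 0"
      then have "\<sigma> s \<le> 0" by (metis s0 s_le not_less)
      then have "le2 u (0, 0)" using \<open>\<not> s > 0\<close> by (simp add: u le2_def vs_def)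
      then have "le2 (t, b) (0, 0)" using Wd_mono[of u "(0,0)" cs] Wu Wd_0 by simp
      then show False using b by (simp add: le2_def)
    qed
    have "Wd \<sigma> (False # cs) (s, 0) = (t, b)" using Wu u by simp
    then show ?thesis using sp t by blast
  next
    case False
    then have same: "\<forall>i<n. Lc \<sigma> (o1 i) = Lc \<sigma> (o2 i)" for n by blast
    show ?thesis
    proof (cases "\<exists>n. snd (o2 n) = 0")
      case True
      then obtain n where n: "snd (o2 n) = 0" by blast
      have X: "o2 n \<in> Xplus" using orbit_X[OF QX] by (simp add: o2_def)
      obtain xq where xq: "o2 n = (xq, 0)" using n by (cases "o2 n") simp
      have "Q = Wd \<sigma> (itw \<sigma> Q n) (o2 n)" using orbit_Wd[OF QX, of n] by (simp add: o2_def)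
      then have W: "Wd \<sigma> (itw \<sigma> Q n) (xq, 0) = (a2, b)" by (simp add: xq Q_def)
      have "xq > 0" using X xq by (simp add: Xplus_def)
      then have "0 < xq \<and> a1 \<le> a2 \<and> a2 \<le> a2 \<and> Wd \<sigma> (itw \<sigma> Q n) (xq, 0) = (a2, b)" using W a by simp
      then show ?thesis by blast
    next
      case False
      have xp: "\<And>n. fst (o2 n) > 0" using orbit_X[OF QX] by (simp add: o2_def Xplus_def)
      have yp: "snd (o2 n) > 0" for n
      proof -
        have "snd (o2 n) \<ge> 0" using orbit_X[OF QX, of n] by (simp add: o2_def Xplus_def)
        moreover have "snd (o2 n) \<noteq> 0" using False by blast
        ultimately show ?thesis by simp
      qed
      obtain n where "fst (o2 n) < l"
        using x_small[of "\<lambda>n. fst (o2 n)" "\<lambda>n. snd (o2 n)" l, OF xp yp _ l] orbit_step[OF QX]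
        by (auto simp: o2_def)
      moreover have "fst (o1 n) > 0" using orbit_X[OF PX] by (simp add: o1_def Xplus_def)
      ultimately show ?thesis using inv[OF same[of n]] by linarith
    qed
  qed
qed

end


lemma dist_le_abs: "dist ((a::real), (b::real)) (c, d) \<le> \<bar>a - c\<bar> + \<bar>b - d\<bar>"
  by (simp add: dist_Pair_Pair dist_real_def sqrt_sum_squares_le_sum_abs)

context sig
begin

lemma orbit_ypos:
  assumes p: "p \<in> Xplus" and irr: "sigma_irrational \<sigma> p"
  shows "snd ((Eucl \<sigma> ^^ k) p) > 0"
proof (rule ccontr)
  assume "\<not> ?thesis"
  moreover have X: "(Eucl \<sigma> ^^ k) p \<in> Xplus" using orbit_X[OF p] .
  ultimately have y0: "snd ((Eucl \<sigma> ^^ k) p) = 0" by (simp add: Xplus_def)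
  define cs where "cs = itw \<sigma> p k"
  obtain xq where xq: "(Eucl \<sigma> ^^ k) p = (xq, 0)" using y0 by (cases "(Eucl \<sigma> ^^ k) p") simp
  have "p = Wd \<sigma> cs (xq, 0)"
    using orbit_Wd[OF p, of k] xq by (simp add: cs_def)
  moreover have "(xq, 0) \<in> Ox" by (simp add: Ox_def)
  ultimately have "p \<in> Wd \<sigma> cs ` Ox" by (rule image_eqI)
  moreover have "Wd \<sigma> cs ` Ox \<in> {m ` Ox | m. m \<in> gen_monoid {hs \<sigma>, vs \<sigma>}}"
    by (intro CollectI exI[of _ "Wd \<sigma> cs"] conjI refl Wd_monoid)
  then have L: "Wd \<sigma> cs ` Ox \<in> sigma_rational_lines \<sigma>"
    unfolding sigma_rational_lines_def by (rule UnI1[OF UnI2])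
  have "\<forall>L \<in> sigma_rational_lines \<sigma>. p \<notin> L" using irr by (simp only: sigma_irrational_def)
  then have "p \<notin> Wd \<sigma> cs ` Ox" using L by (rule bspec)
  ultimately show False by (rule notE[rotated])
qed

lemma Wd_rep: "Wd \<sigma> (replicate j True) z = (fst z + real j * g (snd z), snd z)"
  by (induction j arbitrary: z) (auto simp: hs_eq algebra_simps)

lemma near_axis:
  assumes p: "p \<in> Xplus" and irr: "sigma_irrational \<sigma> p" and s: "s > 0" and d: "d > 0"
  shows "\<exists>k j. dist (Wd \<sigma> (replicate j True) ((Eucl \<sigma> ^^ k) p)) (s, 0) < d"
proof -
  define orb where "orb n = (Eucl \<sigma> ^^ n) p" for n
  have xp: "\<And>n. fst (orb n) > 0" using orbit_X[OF p] by (simp add: orb_def Xplus_def)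
  have yp: "\<And>n. snd (orb n) > 0" using orbit_ypos[OF p irr] by (simp add: orb_def)
  have st: "\<And>n. (fst (orb (Suc n)) = fst (orb n) - g (snd (orb n)) \<and> snd (orb (Suc n)) = snd (orb n)) \<or>
     (fst (orb (Suc n)) = fst (orb n) \<and> snd (orb (Suc n)) = snd (orb n) - \<sigma> (fst (orb n)))"
    using orbit_step[OF p] by (simp add: orb_def)
  have e1: "min s (d/2) > 0" using s d by simp
  have e2: "min (d/2) (\<sigma> (d/2)) > 0" using d by simp
  obtain k1 where k1: "fst (orb k1) < min s (d/2)"
    using x_small[of "\<lambda>n. fst (orb n)" "\<lambda>n. snd (orb n)", OF xp yp st e1] by blast
  obtain k2 where k2: "snd (orb k2) < min (d/2) (\<sigma> (d/2))"
    using y_small[of "\<lambda>n. fst (orb n)" "\<lambda>n. snd (orb n)", OF xp yp st e2] by blast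
  define k where "k = max k1 k2"
  have "fst (orb k) \<le> fst (orb k1)" "snd (orb k) \<le> snd (orb k2)"
    using orbit_mono[OF p, of k1 k] orbit_mono[OF p, of k2 k] by (auto simp: orb_def k_def)
  then have xk: "fst (orb k) < s" "fst (orb k) < d/2" and yk: "snd (orb k) < d/2" "snd (orb k) < \<sigma> (d/2)"
    using k1 k2 by auto
  define xx where "xx = fst (orb k)"
  define yy where "yy = snd (orb k)"
  define gg where "gg = g yy"
  have gp: "gg > 0" using yp by (simp add: gg_def yy_def)
  have gd: "gg < d/2" using yk(2) unfolding gg_def yy_def by (metis g_less g_s)
  define r where "r = (s - xx) / gg"
  have r0: "r \<ge> 0" using xk gp by (simp add: r_def xx_def)
  define j where "j = nat \<lfloor>r\<rfloor>"
  have rj: "real j = of_int \<lfloor>r\<rfloor>" using r0 by (simp add: j_def)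
  have "real j \<le> r" "r < real j + 1" using rj by linarith+
  then have j1: "real j * gg \<le> s - xx" and j2: "s - xx < real j * gg + gg"
    using gp by (auto simp: r_def field_simps)
  have W: "Wd \<sigma> (replicate j True) (orb k) = (xx + real j * gg, yy)"
    by (simp add: Wd_rep xx_def yy_def gg_def)
  have "dist (xx + real j * gg, yy) (s, 0) \<le> \<bar>xx + real j * gg - s\<bar> + \<bar>yy - 0\<bar>"
    by (rule dist_le_abs)
  also have "\<dots> < d/2 + d/2" using j1 j2 gd yk(1) yp[of k]
    by (simp add: yy_def abs_if)
  finally have "dist (Wd \<sigma> (replicate j True) ((Eucl \<sigma> ^^ k) p)) (s, 0) < d"
    using W unfolding orb_def by simp
  then show ?thesis by blast
qed

end

theorem proposition4:
  fixes \<sigma> :: "real \<Rightarrow> real" and p :: "real \<times> real"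
  assumes "strict_mono \<sigma>"
    and "\<And>x. \<sigma> (- x) = - \<sigma> x"
    and "\<exists>g. homeomorphism UNIV UNIV \<sigma> g"
    and "p \<in> Xplus"
    and "sigma_irrational \<sigma> p"
  shows "Xplus \<subseteq> closure ((\<Union>n. \<Union>k. Eucl_preim \<sigma> n {(Eucl \<sigma> ^^ k) p}) \<inter> Xplus)"
proof -
  obtain g where h: "homeomorphism UNIV UNIV \<sigma> g" using assms(3) by blast
  interpret sig \<sigma> g using assms(1,2) h by unfold_locales
  show ?thesis
  proof
    fix t assume t: "t \<in> Xplus"
    obtain a b where ab: "t = (a, b)" by force
    have a: "a > 0" and b: "b \<ge> 0" using t by (auto simp: ab Xplus_def)
    show "t \<in> closure ((\<Union>n. \<Union>k. Eucl_preim \<sigma> n {(Eucl \<sigma> ^^ k) p}) \<inter> Xplus)"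
      unfolding closure_approachable
    proof (intro allI impI)
      fix e :: real assume e: "e > 0"
      define b' where "b' = b + e/4"
      define d1 where "d1 = min (a/2) (e/4)"
      have d1: "d1 > 0" "d1 \<le> a/2" "d1 \<le> e/4" using a e by (auto simp: d1_def)
      obtain cs s z where csz: "0 < s" "a - d1 \<le> z" "z \<le> a + d1" "Wd \<sigma> cs (s, 0) = (z, b')"
        using rat_dense[of "a - d1" "a + d1" b'] d1 b e by (auto simp: b'_def)
      obtain \<delta> where \<delta>: "\<delta> > 0" "\<And>u. dist u (s, 0) < \<delta> \<Longrightarrow> dist (Wd \<sigma> cs u) (Wd \<sigma> cs (s, 0)) < e/2"
        using cont_Wd[of cs] e unfolding continuous_on_iff by (metis UNIV_I half_gt_zero)
      obtain k j where kj: "dist (Wd \<sigma> (replicate j True) ((Eucl \<sigma> ^^ k) p)) (s, 0) < \<delta>"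
        using near_axis[OF assms(4,5) csz(1) \<delta>(1)] by blast
      define q where "q = (Eucl \<sigma> ^^ k) p"
      have qX: "q \<in> Xplus" using orbit_X[OF assms(4)] by (simp add: q_def)
      define ws where "ws = replicate j True @ cs"
      define pt where "pt = Wd \<sigma> ws q"
      have pt_eq: "pt = Wd \<sigma> cs (Wd \<sigma> (replicate j True) q)" by (simp add: pt_def ws_def Wd_append)
      have ptX: "pt \<in> Xplus" using Wd_X[OF qX] by (simp add: pt_def)
      have "(Eucl \<sigma> ^^ length ws) pt = q" using E_Wd[OF qX] by (simp add: pt_def)
      moreover have "pt \<in> Omega" using ptX by (auto simp: Xplus_def Omega_def)
      ultimately have "pt \<in> Eucl_preim \<sigma> (length ws) {(Eucl \<sigma> ^^ k) p}"
        by (simp add: Eucl_preim_def q_def)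
      then have mem: "pt \<in> (\<Union>n. \<Union>k. Eucl_preim \<sigma> n {(Eucl \<sigma> ^^ k) p}) \<inter> Xplus" using ptX by blast
      have "dist pt (z, b') < e/2" using \<delta>(2)[OF kj[folded q_def]] csz(4) pt_eq by simp
      moreover have "dist (z, b') (a, b) \<le> \<bar>z - a\<bar> + \<bar>b' - b\<bar>" by (rule dist_le_abs)
      moreover have "\<bar>z - a\<bar> \<le> e/4"
      proof -
        have "z - a \<le> d1" "a - z \<le> d1" using csz(2,3) by linarith+
        then show ?thesis using d1(3) by linarith
      qed
      moreover have "\<bar>b' - b\<bar> = e/4" using e by (simp add: b'_def)
      ultimately have "dist pt t < e" using dist_triangle[of pt t "(z, b')"] by (simp add: ab)
      then show "\<exists>y\<in>(\<Union>n. \<Union>k. Eucl_preim \<sigma> n {(Eucl \<sigma> ^^ k) p}) \<inter> Xplus. dist y t < e"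
        using mem by blast
    qed
  qed
qed

end
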